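(* For all $\alpha\in(0,1]$ and $D>0$ there exists $M(\alpha,D)>0$ such that, with $n_0:=4K(d+1)/\alpha$: for all $n\ge n_0$, all $\theta\in\Theta$, all $x\in[K^\theta]$ and all $x^*\in[K^*]$, if $|I_{n,D}(x,x^*,\theta)|\ge n\alpha/K$ then $\sup_{t\in[0,n]}|T^*_{x^*}(t)-T^\theta_x(t)|\le M(\alpha,D)$.
   Context: Fix integers $K\ge1$, $d\ge1$, $\sigma_-\in(0,1)$; $[K']=\{1,\dots,K'\}$; $\Delta_{K'}$ = probability vectors on $[K']$; $\Sigma^{\sigma_-}_{K'}$ = $K'\times K'$ stochastic matrices with all entries $\ge\sigma_-$; $\mathbb R_d[X]$ = real polynomials of degree $\le d$ on $\mathbb R_+$; $\Gamma$ a set of probability densities on $\mathbb R$. $\Theta=\bigcup_{K'=1}^K\{[K']\}\times\Delta_{K'}\times\Sigma^{\sigma_-}_{K'}\times\Gamma^{K'}\times(\mathbb R_d[X])^{K'}$, elements $\theta=(K^\theta,\pi^\theta,Q^\theta,\gamma^\theta,T^\theta)$ with trends $T^\theta_x\in\mathbb R_d[X]$; $\theta^*=(K^*,\pi^*,Q^*,\gamma^*,T^* )\in\Theta$ is a fixed (true) parameter. For $n\in\mathbb N^*$, $D>0$: $I_{n,D}(x,x^*,\theta)=\{t\in\{1,\dots,n\}:|T^*_{x^*}(t)-T^\theta_x(t)|\le D\}$. *)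

theory Defs
  imports "HOL-Analysis.Analysis" "HOL-Computational_Algebra.Polynomial"
begin

text \<open>A parameter theta = (K, pi, Q, gamma, T): number of states, initial law,
  transition matrix, emission densities and polynomial trends (states indexed by 1..K).\<close>
record param =
  pK :: nat
  ppi :: "nat \<Rightarrow> real"
  pQ :: "nat \<Rightarrow> nat \<Rightarrow> real"
  pgamma :: "nat \<Rightarrow> real \<Rightarrow> real"
  pT :: "nat \<Rightarrow> real poly"

definition prob_vec :: "nat \<Rightarrow> (nat \<Rightarrow> real) \<Rightarrow> bool" where
  "prob_vec K' p \<longleftrightarrow> (\<forall>i\<in>{1..K'}. p i \<ge> 0) \<and> (\<Sum>i=1..K'. p i) = 1"

definition stoch_mat_lb :: "real \<Rightarrow> nat \<Rightarrow> (nat \<Rightarrow> nat \<Rightarrow> real) \<Rightarrow> bool" where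
  "stoch_mat_lb s K' Q \<longleftrightarrow>
     (\<forall>i\<in>{1..K'}. \<forall>j\<in>{1..K'}. Q i j \<ge> s) \<and> (\<forall>i\<in>{1..K'}. (\<Sum>j=1..K'. Q i j) = 1)"

definition in_Theta :: "nat \<Rightarrow> nat \<Rightarrow> real \<Rightarrow> (real \<Rightarrow> real) set \<Rightarrow> param \<Rightarrow> bool" where
  "in_Theta K d s \<Gamma> \<theta> \<longleftrightarrow>
     1 \<le> pK \<theta> \<and> pK \<theta> \<le> K \<and>
     prob_vec (pK \<theta>) (ppi \<theta>) \<and>
     stoch_mat_lb s (pK \<theta>) (pQ \<theta>) \<and>
     (\<forall>x\<in>{1..pK \<theta>}. pgamma \<theta> x \<in> \<Gamma>) \<and>
     (\<forall>x\<in>{1..pK \<theta>}. degree (pT \<theta> x) \<le> d)"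

definition I_set :: "param \<Rightarrow> nat \<Rightarrow> real \<Rightarrow> nat \<Rightarrow> nat \<Rightarrow> param \<Rightarrow> nat set" where
  "I_set \<theta>s n D x xs \<theta> =
     {t\<in>{1..n}. \<bar>poly (pT \<theta>s xs) (real t) - poly (pT \<theta> x) (real t)\<bar> \<le> D}"

end

theory Submission imports Defs begin

lemma lagrange:
  fixes p :: "real poly" and t :: "nat \<Rightarrow> real"
  assumes deg: "degree p \<le> d" and inj: "inj_on t {..d}"
  shows "poly p x = (\<Sum>i\<le>d. poly p (t i) * (\<Prod>j\<in>{..d}-{i}. (x - t j) / (t i - t j)))"
proof -
  define L where "L = (\<Sum>i\<le>d. smult (poly p (t i) / (\<Prod>j\<in>{..d}-{i}. (t i - t j)))
                                (\<Prod>j\<in>{..d}-{i}. [:- t j, 1:]))"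
  have degL: "degree L \<le> d"
    unfolding L_def
  proof (rule degree_sum_le)
    fix i assume i: "i \<in> {..d}"
    have "degree (\<Prod>j\<in>{..d}-{i}. [:- t j, 1:]) \<le> sum (degree \<circ> (\<lambda>j. [:- t j, 1:])) ({..d}-{i})"
      by (rule degree_prod_sum_le) simp
    also have "\<dots> = card ({..d}-{i})" by simp
    also have "\<dots> = d" using i by simp
    finally show "degree (smult (poly p (t i) / (\<Prod>j\<in>{..d}-{i}. (t i - t j)))
                                (\<Prod>j\<in>{..d}-{i}. [:- t j, 1:])) \<le> d"
      by (meson degree_smult_le order_trans)
  qed simp
  have ev: "poly L y = (\<Sum>i\<le>d. poly p (t i) * (\<Prod>j\<in>{..d}-{i}. (y - t j) / (t i - t j)))" for y
    unfolding L_def poly_sum poly_smult poly_prod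
  proof (rule sum.cong[OF refl])
    fix i
    have "(\<Prod>j\<in>{..d}-{i}. poly [:- t j, 1:] y) = (\<Prod>j\<in>{..d}-{i}. y - t j)"
      by (rule prod.cong) auto
    then show "poly p (t i) / (\<Prod>j\<in>{..d}-{i}. (t i - t j)) * (\<Prod>j\<in>{..d}-{i}. poly [:- t j, 1:] y)
       = poly p (t i) * (\<Prod>j\<in>{..d}-{i}. (y - t j) / (t i - t j))"
      by (simp only: prod_dividef) simp
  qed
  have nz: "(\<Prod>j\<in>{..d}-{i}. (t i - t j)) \<noteq> 0" if "i \<le> d" for i
    using inj that by (auto simp: inj_on_def)
  have agree: "poly p y = poly L y" if yin: "y \<in> t ` {..d}" for y
  proof -
    obtain k where k: "k \<le> d" "y = t k" using yin by auto
    have "poly L y = (\<Sum>i\<le>d. if i = k then poly p (t k) else 0)"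
      unfolding ev
    proof (rule sum.cong)
      fix i assume i: "i \<in> {..d}"
      show "poly p (t i) * (\<Prod>j\<in>{..d}-{i}. (y - t j) / (t i - t j)) = (if i = k then poly p (t k) else 0)"
      proof (cases "i = k")
        case True
        have "(\<Prod>j\<in>{..d}-{i}. (y - t j) / (t i - t j)) = 1"
        proof (rule prod.neutral, rule ballI)
          fix j assume "j \<in> {..d}-{i}"
          then have "t i \<noteq> t j" using inj i by (auto simp: inj_on_def)
          then show "(y - t j) / (t i - t j) = 1" using True k by simp
        qed
        then show ?thesis using True by simp
      next
        case False
        have "(\<Prod>j\<in>{..d}-{i}. (y - t j) / (t i - t j)) = 0"
          using False k by (intro prod_zero) auto
        then show ?thesis using False by simp
      qed
    qed simp
    also have "\<dots> = poly p y" using k by simp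
    finally show ?thesis by simp
  qed
  have card: "card (t ` {..d}) = Suc d" using inj by (simp add: card_image)
  have "p = L"
    by (rule poly_eqI_degree[OF agree]) (use deg degL card in auto)
  then have "poly p x = poly L x" by simp
  also have "\<dots> = (\<Sum>i\<le>d. poly p (t i) * (\<Prod>j\<in>{..d}-{i}. (x - t j) / (t i - t j)))"
    by (rule ev)
  finally show ?thesis .
qed


lemma sorted_gap:
  assumes "sorted_wrt (<) (l::nat list)" "i + k < length l"
  shows "l ! i + k \<le> l ! (i + k)"
  using assms(2)
proof (induction k)
  case 0 then show ?case by simp
next
  case (Suc k)
  then have "l ! i + k \<le> l ! (i + k)" by simp
  moreover have "l ! (i + k) < l ! (i + Suc k)"
    using sorted_wrt_nth_less[OF assms(1)] Suc.prems by simp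
  ultimately show ?case by simp
qed

lemma aux_lin0: "0 \<le> dd \<Longrightarrow> (P::real) \<ge> mm - dd \<Longrightarrow> 4*(dd+1) \<le> A \<Longrightarrow> A \<le> mm \<Longrightarrow> P \<ge> A/2"
  by argo

lemma aux_lin: "0 \<le> dd \<Longrightarrow> (dd::real) * gg \<ge> mm - dd \<Longrightarrow> 4*(dd+1) \<le> A \<Longrightarrow> A \<le> mm \<Longrightarrow> dd*gg \<ge> A/2"
  by (rule aux_lin0)

lemma main_bound:
  fixes p :: "real poly" and S :: "nat set"
  assumes K: "K \<ge> 1" and d: "d \<ge> 1" and al: "0 < \<alpha>" "\<alpha> \<le> 1" and D: "0 < D"
    and n: "real n \<ge> 4 * real K * (real d + 1) / \<alpha>"
    and deg: "degree p \<le> d"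
    and S: "S \<subseteq> {1..n}" and SD: "\<And>t. t \<in> S \<Longrightarrow> \<bar>poly p (real t)\<bar> \<le> D"
    and card: "real (card S) \<ge> real n * \<alpha> / real K"
    and y: "y \<in> {0..real n}"
  shows "\<bar>poly p y\<bar> \<le> real (Suc d) * D * (2 * real K * real d / \<alpha>) ^ d"
proof -
  define m where "m = card S"
  define B where "B = 2 * real K * real d / \<alpha>"
  have finS: "finite S" using S finite_subset by blast
  define l where "l = sorted_list_of_set S"
  have len: "length l = m" unfolding l_def m_def by simp
  have sw: "sorted_wrt (<) l" unfolding l_def by simp
  have setl: "set l = S" unfolding l_def using finS by simp
  have Kpos: "real K > 0" using K by simp
  have n1: "real n * \<alpha> / real K \<ge> 4 * (real d + 1)"
    using n al Kpos by (simp add: field_simps)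
  have m1: "real m \<ge> 4 * (real d + 1)" using n1 card m_def by linarith
  have m1n: "4 * d + 4 \<le> m"
  proof -
    have "real (4*d+4) \<le> real m" using m1 by simp
    then show ?thesis by (simp only: of_nat_le_iff)
  qed
  define g where "g = (m - 1) div d"
  have dg: "m - d \<le> d * g"
  proof -
    have "m - 1 = d * g + (m - 1) mod d" unfolding g_def by simp
    moreover have "(m - 1) mod d < d" using d by simp
    ultimately show ?thesis by linarith
  qed
  have dgm: "d * g \<le> m - 1" unfolding g_def by simp
  have g1: "g \<ge> 1"
  proof (rule ccontr)
    assume "\<not> g \<ge> 1" then have "g = 0" by simp
    then have "m \<le> d" using dg by simp
    then show False using m1n by linarith
  qed
  have dgr: "real d * real g \<ge> real m - real d"
  proof -
    have "real (m - d) \<le> real (d*g)" using dg by (simp only: of_nat_le_iff)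
    moreover have "real m - real d \<le> real (m - d)" by (cases "d \<le> m") (auto simp: of_nat_diff)
    ultimately show ?thesis by simp
  qed
  have ngB: "real n \<le> B * real g"
  proof -
    have "real d * real g \<ge> real n * \<alpha> / real K / 2"
      by (rule aux_lin[OF _ dgr n1]) (use card m_def in simp)+
    then have "real d * real g * 2 * real K \<ge> real n * \<alpha>" using Kpos by (simp add: field_simps)
    then show ?thesis unfolding B_def using al by (simp add: field_simps)
  qed
  have B1: "B \<ge> 1"
  proof -
    have "1 * 1 \<le> K * d" by (rule mult_le_mono[OF K d])
    then have "1 \<le> 2 * K * d" by linarith
    then have "real 1 \<le> real (2 * K * d)" by (simp only: of_nat_le_iff)
    then have "2 * real K * real d \<ge> 1" by simp
    then show ?thesis unfolding B_def using al by (simp add: field_simps)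
  qed
  define t where "t i = real (l ! (i * g))" for i
  have idx: "i * g < m" if "i \<le> d" for i
  proof -
    have "i * g \<le> d * g" using that by simp
    then show ?thesis using dgm m1n by linarith
  qed
  have tin: "l ! (i * g) \<in> S" if "i \<le> d" for i
    using idx[OF that] len setl nth_mem by blast
  have gap: "real g \<le> \<bar>t i - t j\<bar>" if "i \<le> d" "j \<le> d" "i \<noteq> j" for i j
  proof -
    have *: "real g \<le> t b - t a" if "a < b" "b \<le> d" for a b
    proof -
      have "a * g + (b - a) * g = b * g" using that
        by (metis add_mult_distrib le_add_diff_inverse less_imp_le_nat)
      then have "l ! (a * g) + (b - a) * g \<le> l ! (b * g)"
        using sorted_gap[OF sw, of "a * g" "(b - a) * g"] idx[OF that(2)] len by simp
      moreover have "g \<le> (b - a) * g"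
      proof -
        have "1 \<le> b - a" using that by simp
        then show ?thesis by simp
      qed
      ultimately show ?thesis unfolding t_def by linarith
    qed
    show ?thesis
    proof (cases "i < j")
      case True then show ?thesis using *[of i j] that by simp
    next
      case False then have "j < i" using that by simp
      then show ?thesis using *[of j i] that by simp
    qed
  qed
  have inj: "inj_on t {..d}"
  proof (rule inj_onI, rule ccontr)
    fix i j assume "i \<in> {..d}" "j \<in> {..d}" "t i = t j" "i \<noteq> j"
    then have "real g \<le> 0" using gap[of i j] by simp
    then show False using g1 by simp
  qed
  have tS: "t i \<ge> 1 \<and> t i \<le> real n" if "i \<le> d" for i
    using tin[OF that] S unfolding t_def by auto
  have lag: "poly p y = (\<Sum>i\<le>d. poly p (t i) * (\<Prod>j\<in>{..d}-{i}. (y - t j) / (t i - t j)))"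
    by (rule lagrange[OF deg inj])
  have trm: "\<bar>poly p (t i) * (\<Prod>j\<in>{..d}-{i}. (y - t j) / (t i - t j))\<bar> \<le> D * B ^ d"
    if i: "i \<in> {..d}" for i
  proof -
    have pD: "\<bar>poly p (t i)\<bar> \<le> D" using SD tin i unfolding t_def by auto
    have "\<bar>\<Prod>j\<in>{..d}-{i}. (y - t j) / (t i - t j)\<bar> = (\<Prod>j\<in>{..d}-{i}. \<bar>(y - t j) / (t i - t j)\<bar>)"
      by (rule abs_prod)
    also have "\<dots> \<le> B ^ d"
    proof (rule prod_le_power)
      fix j assume j: "j \<in> {..d}-{i}"
      have "\<bar>y - t j\<bar> \<le> real n" using tS[of j] j y by auto
      moreover have "real g \<le> \<bar>t i - t j\<bar>" using gap[of i j] i j by auto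
      moreover have "real g > 0" using g1 by simp
      ultimately have "\<bar>y - t j\<bar> / \<bar>t i - t j\<bar> \<le> real n / real g"
        by (intro frac_le) auto
      also have "\<dots> \<le> B" using ngB g1 by (simp add: field_simps)
      finally show "0 \<le> \<bar>(y - t j) / (t i - t j)\<bar> \<and> \<bar>(y - t j) / (t i - t j)\<bar> \<le> B"
        by simp
    next
      show "card ({..d}-{i}) \<le> d" using i by simp
    qed (rule B1)
    finally have "\<bar>\<Prod>j\<in>{..d}-{i}. (y - t j) / (t i - t j)\<bar> \<le> B ^ d" .
    then show ?thesis unfolding abs_mult using pD
      by (intro mult_mono) auto
  qed
  have "\<bar>poly p y\<bar> \<le> (\<Sum>i\<le>d. \<bar>poly p (t i) * (\<Prod>j\<in>{..d}-{i}. (y - t j) / (t i - t j))\<bar>)"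
    unfolding lag by (rule sum_abs)
  also have "\<dots> \<le> (\<Sum>i\<le>d. D * B ^ d)" by (rule sum_mono) (rule trm)
  also have "\<dots> = real (Suc d) * D * B ^ d" by simp
  finally show ?thesis unfolding B_def .
qed

theorem proposition10:
  fixes K d :: nat and s :: real and \<Gamma> :: "(real \<Rightarrow> real) set" and \<theta>s :: param
  assumes "K \<ge> 1" and "d \<ge> 1" and "0 < s" and "s < 1"
    and "\<forall>g\<in>\<Gamma>. (\<forall>y. g y \<ge> 0) \<and> (g has_integral 1) UNIV"
    and "in_Theta K d s \<Gamma> \<theta>s"
  shows "\<forall>\<alpha> D. 0 < \<alpha> \<and> \<alpha> \<le> 1 \<and> 0 < D \<longrightarrow>
          (\<exists>M>0. \<forall>n::nat. real n \<ge> 4 * real K * (real d + 1) / \<alpha> \<longrightarrow>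
             (\<forall>\<theta> x xs. in_Theta K d s \<Gamma> \<theta> \<and> x \<in> {1..pK \<theta>} \<and> xs \<in> {1..pK \<theta>s} \<and>
                real (card (I_set \<theta>s n D x xs \<theta>)) \<ge> real n * \<alpha> / real K \<longrightarrow>
                (\<forall>t\<in>{0..real n}. \<bar>poly (pT \<theta>s xs) t - poly (pT \<theta> x) t\<bar> \<le> M)))"
proof (intro allI impI)
  fix \<alpha> D :: real
  assume aD: "0 < \<alpha> \<and> \<alpha> \<le> 1 \<and> 0 < D"
  have Bpos: "2 * real K * real d / \<alpha> > 0" using assms(1,2) aD by simp
  show "\<exists>M>0. \<forall>n::nat. real n \<ge> 4 * real K * (real d + 1) / \<alpha> \<longrightarrow>
             (\<forall>\<theta> x xs. in_Theta K d s \<Gamma> \<theta> \<and> x \<in> {1..pK \<theta>} \<and> xs \<in> {1..pK \<theta>s} \<and>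
                real (card (I_set \<theta>s n D x xs \<theta>)) \<ge> real n * \<alpha> / real K \<longrightarrow>
                (\<forall>t\<in>{0..real n}. \<bar>poly (pT \<theta>s xs) t - poly (pT \<theta> x) t\<bar> \<le> M))"
  proof (intro exI[of _ "real (Suc d) * D * (2 * real K * real d / \<alpha>) ^ d"] conjI allI impI ballI)
    show "0 < real (Suc d) * D * (2 * real K * real d / \<alpha>) ^ d" using aD Bpos by simp
  next
    fix n :: nat and \<theta> x xs and y :: real
    assume n: "4 * real K * (real d + 1) / \<alpha> \<le> real n"
      and H: "in_Theta K d s \<Gamma> \<theta> \<and> x \<in> {1..pK \<theta>} \<and> xs \<in> {1..pK \<theta>s} \<and>
                real (card (I_set \<theta>s n D x xs \<theta>)) \<ge> real n * \<alpha> / real K"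
      and y: "y \<in> {0..real n}"
    define p where "p = pT \<theta>s xs - pT \<theta> x"
    have d1: "degree (pT \<theta>s xs) \<le> d" using assms(6) H unfolding in_Theta_def by blast
    have d2: "degree (pT \<theta> x) \<le> d" using H unfolding in_Theta_def by blast
    have deg: "degree p \<le> d" unfolding p_def
      using degree_diff_le[OF d1 d2] .
    have "\<bar>poly p y\<bar> \<le> real (Suc d) * D * (2 * real K * real d / \<alpha>) ^ d"
    proof (rule main_bound[where S="I_set \<theta>s n D x xs \<theta>", OF assms(1,2) _ _ _ n deg])
      show "I_set \<theta>s n D x xs \<theta> \<subseteq> {1..n}" unfolding I_set_def by auto
      show "\<bar>poly p (real t)\<bar> \<le> D" if "t \<in> I_set \<theta>s n D x xs \<theta>" for t
        using that unfolding I_set_def p_def by simp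
    qed (use aD H y in auto)
    then show "\<bar>poly (pT \<theta>s xs) y - poly (pT \<theta> x) y\<bar> \<le> real (Suc d) * D * (2 * real K * real d / \<alpha>) ^ d"
      unfolding p_def by simp
  qed
qed

end
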